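(* Assume $n\ge 2$ and $\chi\neq\{0\}$. The reshuffling property and the strongly aggregate contributions property are independent: there exists a risk-sharing rule on $\chi^n$ that satisfies the reshuffling property but does not have strongly aggregate contributions, and there exists a risk-sharing rule on $\chi^n$ that has strongly aggregate contributions but does not satisfy the reshuffling property.
   Context: Fix a probability space $(\Omega,\mathcal{F},\mathbb{P})$ and an integer $n$. Let $\chi$ be a convex cone of non-negative random variables on this space (closed under addition and under multiplication by positive scalars) with $0\in\chi$. Equalities between random variables are understood almost surely. A pool is a vector $\boldsymbol{X}=(X_1,\ldots,X_n)\in\chi^n$, with aggregate loss $S_{\boldsymbol{X}}=\sum_{i=1}^n X_i$. A risk-sharing (RS) rule is a mapping $\boldsymbol{C}$ assigning to every pool $\boldsymbol{X}\in\chi^n$ a vector $\boldsymbol{C}[\boldsymbol{X}]=(C_1[\boldsymbol{X}],\ldots,C_n[\boldsymbol{X}])$ of real-valued random variables satisfying $\sum_{i=1}^n C_i[\boldsymbol{X}]=S_{\boldsymbol{X}}$. For a permutation $\pi$ of $\{1,\ldots,n\}$, $\boldsymbol{X}^\pi=(X_{\pi(1)},\ldots,X_{\pi(n)})$. Reshuffling property: $C_i[\boldsymbol{X}^\pi]=C_{\pi(i)}[\boldsymbol{X}]$ for all pools $\boldsymbol{X}$, permutations $\pi$ and indices $i$. Strongly aggregate contributions: there exists a single function $\mathbf{h}=(h_1,\ldots,h_n):\mathbb{R}\to\mathbb{R}^n$ (the same for all pools) such that $C_i[\boldsymbol{X}]=h_i(S_{\boldsymbol{X}})$ for every pool $\boldsymbol{X}$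 and every $i$. *)

theory Defs
  imports "HOL-Probability.Probability" "HOL-Combinatorics.Permutations"
begin

text \<open>Random variables on the probability space M are real-valued functions on
  the sample space; equalities between random variables are understood a.s.\<close>

definition rv_cone :: "'a measure \<Rightarrow> ('a \<Rightarrow> real) set \<Rightarrow> bool" where
  "rv_cone M K \<longleftrightarrow>
     K \<subseteq> borel_measurable M \<and>
     (\<forall>X\<in>K. \<forall>\<omega>\<in>space M. 0 \<le> X \<omega>) \<and>
     (\<lambda>_. 0) \<in> K \<and>
     (\<forall>X\<in>K. \<forall>Y\<in>K. (\<lambda>\<omega>. X \<omega> + Y \<omega>) \<in> K) \<and>
     (\<forall>X\<in>K. \<forall>c::real. c > 0 \<longrightarrow> (\<lambda>\<omega>. c * X \<omega>) \<in> K)"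

text \<open>Pools: vectors (X 0, ..., X (n-1)) in K^n, indexed by {..<n};
  entries at indices \<ge> n are fixed to 0 so that a pool is exactly an n-vector.\<close>
definition pools :: "('a \<Rightarrow> real) set \<Rightarrow> nat \<Rightarrow> (nat \<Rightarrow> 'a \<Rightarrow> real) set" where
  "pools K n = {X. (\<forall>i<n. X i \<in> K) \<and> (\<forall>i\<ge>n. X i = (\<lambda>_. 0))}"

definition agg :: "nat \<Rightarrow> (nat \<Rightarrow> 'a \<Rightarrow> real) \<Rightarrow> 'a \<Rightarrow> real" where
  "agg n X = (\<lambda>\<omega>. \<Sum>i<n. X i \<omega>)"

text \<open>A risk-sharing rule: to every pool it assigns n real random variables
  summing (a.s.) to the aggregate loss; being a map on (a.s.-classes of) random
  variables, a.s.-equal pools receive a.s.-equal contributions.\<close>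
definition RS_rule :: "'a measure \<Rightarrow> ('a \<Rightarrow> real) set \<Rightarrow> nat \<Rightarrow>
    ((nat \<Rightarrow> 'a \<Rightarrow> real) \<Rightarrow> nat \<Rightarrow> 'a \<Rightarrow> real) \<Rightarrow> bool" where
  "RS_rule M K n C \<longleftrightarrow>
     (\<forall>X\<in>pools K n. \<forall>i<n. C X i \<in> borel_measurable M) \<and>
     (\<forall>X\<in>pools K n. AE \<omega> in M. (\<Sum>i<n. C X i \<omega>) = agg n X \<omega>) \<and>
     (\<forall>X\<in>pools K n. \<forall>Y\<in>pools K n.
        (\<forall>i<n. AE \<omega> in M. X i \<omega> = Y i \<omega>) \<longrightarrow>
        (\<forall>i<n. AE \<omega> in M. C X i \<omega> = C Y i \<omega>))"

definition reshuffling :: "'a measure \<Rightarrow> ('a \<Rightarrow> real) set \<Rightarrow> nat \<Rightarrow>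
    ((nat \<Rightarrow> 'a \<Rightarrow> real) \<Rightarrow> nat \<Rightarrow> 'a \<Rightarrow> real) \<Rightarrow> bool" where
  "reshuffling M K n C \<longleftrightarrow>
     (\<forall>X\<in>pools K n. \<forall>\<pi>. \<pi> permutes {..<n} \<longrightarrow>
        (\<forall>i<n. AE \<omega> in M. C (X \<circ> \<pi>) i \<omega> = C X (\<pi> i) \<omega>))"

definition strongly_aggregate :: "'a measure \<Rightarrow> ('a \<Rightarrow> real) set \<Rightarrow> nat \<Rightarrow>
    ((nat \<Rightarrow> 'a \<Rightarrow> real) \<Rightarrow> nat \<Rightarrow> 'a \<Rightarrow> real) \<Rightarrow> bool" where
  "strongly_aggregate M K n C \<longleftrightarrow>
     (\<exists>h :: nat \<Rightarrow> real \<Rightarrow> real. \<forall>X\<in>pools K n. \<forall>i<n.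
        AE \<omega> in M. C X i \<omega> = h i (agg n X \<omega>))"

end

theory Submission
  imports Defs
begin

theorem proposition3:
  fixes M :: "'a measure" and K :: "('a \<Rightarrow> real) set" and n :: nat
  assumes "prob_space M"
    and "rv_cone M K"
    and "n \<ge> 2"
    and "\<exists>X\<in>K. \<not> (AE \<omega> in M. X \<omega> = 0)"
  shows "(\<exists>C. RS_rule M K n C \<and> reshuffling M K n C \<and> \<not> strongly_aggregate M K n C)
       \<and> (\<exists>C. RS_rule M K n C \<and> strongly_aggregate M K n C \<and> \<not> reshuffling M K n C)"
proof -
  obtain Y where YK: "Y \<in> K" and Ynz: "\<not> (AE \<omega> in M. Y \<omega> = 0)" using assms(4) by blast
  have Kmeas: "K \<subseteq> borel_measurable M" and K0: "(\<lambda>_. 0) \<in> K"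
    using assms(2) unfolding rv_cone_def by auto
  have n0: "0 < n" and n1: "1 < n" using assms(3) by auto
  define X1 :: "nat \<Rightarrow> 'a \<Rightarrow> real" where "X1 = (\<lambda>i. if i = 0 then Y else (\<lambda>_. 0))"
  define X2 :: "nat \<Rightarrow> 'a \<Rightarrow> real" where "X2 = (\<lambda>i. if i = 1 then Y else (\<lambda>_. 0))"
  have X1p: "X1 \<in> pools K n" unfolding X1_def pools_def using YK K0 n0 by auto
  have X2p: "X2 \<in> pools K n" unfolding X2_def pools_def using YK K0 n1 by auto
  have aggX1: "agg n X1 = Y"
  proof
    fix \<omega>
    have "(\<Sum>i<n. X1 i \<omega>) = (\<Sum>i<n. if i = 0 then Y \<omega> else 0)"
      by (rule sum.cong) (auto simp: X1_def)
    then show "agg n X1 \<omega> = Y \<omega>" using n0 by (simp add: agg_def)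
  qed
  have aggX2: "agg n X2 = Y"
  proof
    fix \<omega>
    have "(\<Sum>i<n. X2 i \<omega>) = (\<Sum>i<n. if i = 1 then Y \<omega> else 0)"
      by (rule sum.cong) (auto simp: X2_def)
    then show "agg n X2 \<omega> = Y \<omega>" using n1 by (simp add: agg_def)
  qed
  have part1: "\<exists>C. RS_rule M K n C \<and> reshuffling M K n C \<and> \<not> strongly_aggregate M K n C"
  proof (intro exI[of _ "\<lambda>X i. X i"] conjI)
    show "RS_rule M K n (\<lambda>X i. X i)"
      unfolding RS_rule_def pools_def agg_def using Kmeas by auto
    show "reshuffling M K n (\<lambda>X i. X i)"
      unfolding reshuffling_def by auto
    show "\<not> strongly_aggregate M K n (\<lambda>X i. X i)"
    proof
      assume "strongly_aggregate M K n (\<lambda>X i. X i)"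
      then obtain h where h: "\<forall>X\<in>pools K n. \<forall>i<n. AE \<omega> in M. X i \<omega> = h i (agg n X \<omega>)"
        unfolding strongly_aggregate_def by blast
      have a1: "AE \<omega> in M. Y \<omega> = h 0 (Y \<omega>)" using h X1p n0 aggX1 unfolding X1_def by force
      have a2: "AE \<omega> in M. 0 = h 0 (Y \<omega>)" using h X2p n0 aggX2 unfolding X2_def by force
      have "AE \<omega> in M. Y \<omega> = 0" using a1 a2 by eventually_elim simp
      with Ynz show False by blast
    qed
  qed
  define C :: "(nat \<Rightarrow> 'a \<Rightarrow> real) \<Rightarrow> nat \<Rightarrow> 'a \<Rightarrow> real"
    where "C = (\<lambda>X i. if i = 0 then agg n X else (\<lambda>_. 0))"
  have part2: "RS_rule M K n C \<and> strongly_aggregate M K n C \<and> \<not> reshuffling M K n C"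
  proof (intro conjI)
    show "RS_rule M K n C"
      unfolding RS_rule_def
    proof (intro conjI ballI allI impI)
      fix X i assume X: "X \<in> pools K n" and "i < n"
      have "\<forall>j<n. X j \<in> borel_measurable M" using X Kmeas unfolding pools_def by auto
      then have "agg n X \<in> borel_measurable M" unfolding agg_def by (intro borel_measurable_sum) auto
      then show "C X i \<in> borel_measurable M" unfolding C_def by auto
    next
      fix X assume "X \<in> pools K n"
      show "AE \<omega> in M. (\<Sum>i<n. C X i \<omega>) = agg n X \<omega>"
      proof (rule AE_I2)
        fix \<omega>
        have "(\<Sum>i<n. C X i \<omega>) = (\<Sum>i<n. if i = 0 then agg n X \<omega> else 0)"
          by (rule sum.cong) (auto simp: C_def)
        then show "(\<Sum>i<n. C X i \<omega>) = agg n X \<omega>" using n0 by simp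
      qed
    next
      fix X Y' i assume "X \<in> pools K n" "Y' \<in> pools K n"
        and eq: "\<forall>i<n. AE \<omega> in M. X i \<omega> = Y' i \<omega>" and "i < n"
      have "AE \<omega> in M. \<forall>j\<in>{..<n}. X j \<omega> = Y' j \<omega>"
        using eq by (subst AE_finite_all) auto
      then have "AE \<omega> in M. agg n X \<omega> = agg n Y' \<omega>"
        by eventually_elim (simp add: agg_def)
      then show "AE \<omega> in M. C X i \<omega> = C Y' i \<omega>"
        unfolding C_def by (cases "i = 0") auto
    qed
    show "strongly_aggregate M K n C"
      unfolding strongly_aggregate_def
      by (rule exI[of _ "\<lambda>i s. if i = 0 then s else 0"]) (auto simp: C_def)
    show "\<not> reshuffling M K n C"
    proof
      assume r: "reshuffling M K n C"
      have p: "Transposition.transpose 0 1 permutes {..<n}"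
        using n0 n1 by (intro permutes_swap_id) auto
      have "AE \<omega> in M. C (X1 \<circ> Transposition.transpose 0 1) 1 \<omega> = C X1 (Transposition.transpose 0 1 1) \<omega>"
        using r X1p p n1 unfolding reshuffling_def by blast
      then have "AE \<omega> in M. 0 = Y \<omega>" using aggX1 by (simp add: C_def)
      then have "AE \<omega> in M. Y \<omega> = 0" by eventually_elim simp
      with Ynz show False by blast
    qed
  qed
  show ?thesis using part1 part2 by blast
qed

end
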